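(* For every integer $n\geq 0$, $$M_n=\sum_{k=0}^{n}(-1)^{n-k}\binom{n}{k}C_{k+1}=\sum_{k=0}^{n}(-1)^{k}3^{n-k}\binom{n}{k}C_{k+1}=\frac{1}{(\sqrt2)^{n+2}}\sum_{k=0}^{n}(\sqrt2-3)^{n-k}\binom{n}{k}S_{k+1}=\frac{1}{(\sqrt2)^{n+2}}\sum_{k=0}^{n}(-1)^k(3+\sqrt2)^{n-k}\binom{n}{k}S_{k+1},$$ where $C_m$, $M_m$, $S_m$ are the Catalan, Motzkin and (large) Schröder numbers.
   Context: $C_m=\frac{1}{m+1}\binom{2m}{m}$ is the Catalan number; $M_m=\sum_{k=0}^{\lfloor m/2\rfloor}\binom{m}{2k}C_k$ is the Motzkin number; $S_m$ is the number of Schröder paths from $(0,0)$ to $(m,m)$ with steps $(0,1),(1,0),(1,1)$ never going below the line $y=x$, i.e. $S_m=\sum_{k=0}^{m}\binom{m+k}{2k}C_k$ (so $S_0=1,S_1=2,S_2=6,S_3=22,\dots$). *)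

theory Defs
  imports Complex_Main
begin

definition catalan :: "nat \<Rightarrow> real" where
  "catalan m = real ((2*m) choose m) / real (m + 1)"

definition motzkin :: "nat \<Rightarrow> real" where
  "motzkin m = (\<Sum>k=0..m div 2. real (m choose (2*k)) * catalan k)"

definition schroeder :: "nat \<Rightarrow> real" where
  "schroeder m = (\<Sum>k=0..m. real ((m + k) choose (2*k)) * catalan k)"

end

theory Submission
  imports Defs
begin


lemma chooseL1: "real (Suc n choose Suc j) = real (Suc n) / real (Suc j) * real (n choose j)"
proof -
  have "real (Suc n) * real (n choose j) = real (Suc n choose Suc j) * real (Suc j)"
    using Suc_times_binomial_eq[of n j] by (metis of_nat_mult)
  then show ?thesis by (simp add: field_simps)
qed

lemma chooseL2: "real (n choose Suc j) = real (n choose j) * (real n - real j) / real (Suc j)"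
proof -
  have "real (Suc n choose Suc j) = real (n choose j) + real (n choose Suc j)" by simp
  then have "real (n choose Suc j) = real (Suc n) / real (Suc j) * real (n choose j) - real (n choose j)"
    using chooseL1[of n j] by simp
  then show ?thesis by (simp add: field_simps)
qed

lemma catalan_Suc: "catalan (Suc p) = catalan p * (2 * (2 * real p + 1)) / (real p + 2)"
proof -
  have a: "real (Suc (Suc (2*p)) choose Suc p) = real (Suc (Suc (2*p))) / real (Suc p) * real (Suc (2*p) choose p)"
    by (rule chooseL1)
  have b: "real (Suc (2*p) choose p) = real (Suc (2*p)) / real (Suc p) * real ((2*p) choose p)"
  proof -
    have "real (Suc (2*p) choose Suc p) = real (Suc (2*p)) / real (Suc p) * real (2*p choose p)" by (rule chooseL1)
    moreover have "Suc (2*p) choose Suc p = Suc (2*p) choose p"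
      by (metis add_Suc_right binomial_symmetric le_add2 mult_2 add_diff_cancel_left' le_Suc_eq le_add1 Suc_diff_le)
    ultimately show ?thesis by simp
  qed
  have "catalan (Suc p) = real (Suc (Suc (2*p)) choose Suc p) / (real p + 2)"
    unfolding catalan_def by (simp add: add.commute)
  also have "\<dots> = real (Suc (Suc (2*p))) / real (Suc p) * (real (Suc (2*p)) / real (Suc p) * real ((2*p) choose p)) / (real p + 2)"
    by (simp only: a b)
  also have "\<dots> = catalan p * (2 * (2 * real p + 1)) / (real p + 2)"
  proof -
    have h1: "real p + 1 \<noteq> 0" "real p + 2 \<noteq> 0" by linarith+
    show ?thesis unfolding catalan_def using h1 by (simp add: divide_simps) (simp add: algebra_simps)
  qed
  finally show ?thesis .
qed

lemma keyB:
  fixes k p :: nat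
  shows "(real k+4) * real (Suc (Suc k) choose Suc (Suc (2*p))) * catalan (Suc p)
       - (2*real k + 5) * real (Suc k choose Suc (Suc (2*p))) * catalan (Suc p)
       + (real k+1) * real (k choose Suc (Suc (2*p))) * catalan (Suc p)
       = 4 * (real k+1) * real (k choose (2*p)) * catalan p"
proof -
  define b where "b = real (k choose (2*p))"
  define c where "c = catalan p"
  have h: "2*real p+1 \<noteq> 0" "2*real p+2 \<noteq> 0" "real p + 2 \<noteq> 0" by linarith+
  have e1: "real (k choose Suc (2*p)) = b * (real k - 2*real p) / (2*real p+1)"
    using chooseL2[of k "2*p"] unfolding b_def by simp
  have e2: "real (k choose Suc (Suc (2*p))) = b * (real k - 2*real p) / (2*real p+1) * (real k - 2*real p - 1) / (2*real p+2)"
  proof -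
    have "2*real p+1 \<noteq> 0" "2*real p+2 \<noteq> 0" by linarith+
    then show ?thesis using chooseL2[of k "Suc (2*p)"] e1 by (simp add: divide_simps) (simp add: algebra_simps)
  qed
  have e3: "real (Suc k choose Suc (Suc (2*p))) = (real k + 1) / (2*real p+2) * (b * (real k - 2*real p) / (2*real p+1))"
    using chooseL1[of k "Suc (2*p)"] e1 h by (simp del: binomial_Suc_Suc add: divide_simps) (simp add: algebra_simps)
  have e4: "real (Suc (Suc k) choose Suc (Suc (2*p))) = (real k + 2) / (2*real p+2) * ((real k + 1) / (2*real p+1) * b)"
    using chooseL1[of "Suc k" "Suc (2*p)"] chooseL1[of k "2*p"] using h unfolding b_def by (simp del: binomial_Suc_Suc add: divide_simps) (simp add: algebra_simps)
  have e5: "catalan (Suc p) = c * (2 * (2 * real p + 1)) / (real p + 2)"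
    unfolding c_def by (rule catalan_Suc)
  show ?thesis unfolding e2 e3 e4 e5 using h by (simp add: divide_simps b_def[symmetric] c_def[symmetric]) (simp add: algebra_simps)
qed

lemma keyS:
  fixes k p :: nat
  shows "(real k+3) * real (k+p+3 choose Suc (Suc (2*p))) * catalan (Suc p)
       - 3*(2*real k + 3) * real (k+p+2 choose Suc (Suc (2*p))) * catalan (Suc p)
       + real k * real (k+p+1 choose Suc (Suc (2*p))) * catalan (Suc p)
       = - (4*real k+6) * real (k+p+2 choose Suc (Suc (2*p))) * catalan (Suc p) 
         + (4*real k+6) * real (k+p+1 choose (2*p)) * catalan p"
proof -
  define n where "n = k+p+1"
  have nn: "k+p+2 = Suc n" "k+p+3 = Suc (Suc n)" "real n = real k + real p + 1" unfolding n_def by simp_all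
  define b where "b = real (n choose (2*p))"
  define c where "c = catalan p"
  have h: "2*real p+1 \<noteq> 0" "2*real p+2 \<noteq> 0" "real p + 2 \<noteq> 0" by linarith+
  have e1: "real (n choose Suc (2*p)) = b * (real n - 2*real p) / (2*real p+1)"
    using chooseL2[of n "2*p"] unfolding b_def by simp
  have e2: "real (n choose Suc (Suc (2*p))) = b * (real n - 2*real p) / (2*real p+1) * (real n - 2*real p - 1) / (2*real p+2)"
  proof -
    have "2*real p+1 \<noteq> 0" "2*real p+2 \<noteq> 0" by linarith+
    then show ?thesis using chooseL2[of n "Suc (2*p)"] e1 by (simp add: divide_simps) (simp add: algebra_simps)
  qed
  have e3: "real (Suc n choose Suc (Suc (2*p))) = (real n + 1) / (2*real p+2) * (b * (real n - 2*real p) / (2*real p+1))"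
    using chooseL1[of n "Suc (2*p)"] e1 h by (simp del: binomial_Suc_Suc add: divide_simps) (simp add: algebra_simps)
  have e4: "real (Suc (Suc n) choose Suc (Suc (2*p))) = (real n + 2) / (2*real p+2) * ((real n + 1) / (2*real p+1) * b)"
    using chooseL1[of "Suc n" "Suc (2*p)"] chooseL1[of n "2*p"] using h unfolding b_def by (simp del: binomial_Suc_Suc add: divide_simps) (simp add: algebra_simps)
  have e5: "catalan (Suc p) = c * (2 * (2 * real p + 1)) / (real p + 2)"
    unfolding c_def by (rule catalan_Suc)
  show ?thesis unfolding nn(1,2) n_def[symmetric] e2 e3 e4 e5 using h
    by (simp add: divide_simps b_def[symmetric] c_def[symmetric] nn(3)) (simp add: algebra_simps)
qed

definition Bx :: "real \<Rightarrow> nat \<Rightarrow> real" where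
  "Bx x k = (\<Sum>i=0..k. real (k choose (2*i)) * catalan i * x^i)"

lemma Bx_ext: assumes "k \<le> N" shows "Bx x k = (\<Sum>i=0..N. real (k choose (2*i)) * catalan i * x^i)"
  unfolding Bx_def using assms by (intro sum.mono_neutral_left) auto

lemma Bx_rec:
  "(real k+4) * Bx x (k+2) = (2*real k+5) * Bx x (k+1) + (4*x-1)*(real k+1) * Bx x k"
proof -
  define F where "F j i = real (j choose (2*i)) * catalan i * x^i" for j i
  define G where "G i = (case i of 0 \<Rightarrow> 0 | Suc p \<Rightarrow> -4*(real k+1)*real(k choose (2*p))*catalan p*x^(Suc p))" for i
  have pt: "(real k+4) * F (k+2) i - (2*real k+5) * F (k+1) i - (4*x-1)*(real k+1) * F k i = G (Suc i) - G i" for i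
  proof (cases i)
    case 0
    then show ?thesis unfolding F_def G_def by (simp add: catalan_def algebra_simps)
  next
    case (Suc p)
    have kb: "((real k+4) * real (Suc (Suc k) choose Suc (Suc (2*p))) * catalan (Suc p)
       - (2*real k + 5) * real (Suc k choose Suc (Suc (2*p))) * catalan (Suc p)
       + (real k+1) * real (k choose Suc (Suc (2*p))) * catalan (Suc p)) * x^(Suc p)
       = 4 * (real k+1) * real (k choose (2*p)) * catalan p * x^(Suc p)"
      using keyB[of k p] by simp
    have "2 * Suc p = Suc (Suc (2*p))" by simp
    then show ?thesis unfolding F_def G_def Suc using kb
      by (simp del: binomial_Suc_Suc add: algebra_simps)
  qed
  have "(\<Sum>i=0..k+2. (real k+4) * F (k+2) i - (2*real k+5) * F (k+1) i - (4*x-1)*(real k+1) * F k i)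
      = (\<Sum>i=0..k+2. G (Suc i) - G i)"
    using pt by simp
  also have "\<dots> = G (Suc (k+2)) - G 0" by (rule sum_Suc_diff) simp
  also have "\<dots> = 0" unfolding G_def by simp
  finally have z: "(\<Sum>i=0..k+2. (real k+4) * F (k+2) i - (2*real k+5) * F (k+1) i - (4*x-1)*(real k+1) * F k i) = 0" .
  have b2: "Bx x (k+2) = (\<Sum>i=0..k+2. F (k+2) i)" unfolding Bx_def F_def by simp
  have b1: "Bx x (k+1) = (\<Sum>i=0..k+2. F (k+1) i)" unfolding F_def by (rule Bx_ext) simp
  have b0: "Bx x k = (\<Sum>i=0..k+2. F k i)" unfolding F_def by (rule Bx_ext) simp
  show ?thesis using z unfolding b2 b1 b0 sum_subtractf sum_distrib_left[symmetric] by simp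
qed

lemma S_ext: assumes "m \<le> N" shows "schroeder m = (\<Sum>i=0..N. real ((m+i) choose (2*i)) * catalan i)"
  unfolding schroeder_def using assms by (intro sum.mono_neutral_left) auto

lemma S_rec:
  "(real k+3) * schroeder (k+2) = 3*(2*real k+3) * schroeder (k+1) - real k * schroeder k"
proof -
  define F where "F j i = real ((j+i) choose (2*i)) * catalan i" for j i
  define G where "G i = (case i of 0 \<Rightarrow> 0 | Suc p \<Rightarrow> -(4*real k+6)*real((k+p+1) choose (2*p))*catalan p)" for i
  have pt: "(real k+3) * F (k+2) i - 3*(2*real k+3) * F (k+1) i + real k * F k i = G (Suc i) - G i" for i
  proof (cases i)
    case 0
    then show ?thesis unfolding F_def G_def by (simp add: catalan_def algebra_simps)
  next
    case (Suc p)
    have kb: "(real k+3) * real (k+p+3 choose Suc (Suc (2*p))) * catalan (Suc p)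
       - 3*(2*real k + 3) * real (k+p+2 choose Suc (Suc (2*p))) * catalan (Suc p)
       + real k * real (k+p+1 choose Suc (Suc (2*p))) * catalan (Suc p)
       = - (4*real k+6) * real (k+p+2 choose Suc (Suc (2*p))) * catalan (Suc p) 
         + (4*real k+6) * real (k+p+1 choose (2*p)) * catalan p"
      by (rule keyS)
    have e: "2 * Suc p = Suc (Suc (2*p))" "k+2+Suc p = k+p+3" "k+1+Suc p = k+p+2" "k+Suc p = k+p+1"
      "k + Suc p + 1 = k+p+2" by simp_all
    show ?thesis unfolding F_def G_def Suc nat.case e using kb
      by (simp del: binomial_Suc_Suc add: algebra_simps)
  qed
  have "(\<Sum>i=0..k+2. (real k+3) * F (k+2) i - 3*(2*real k+3) * F (k+1) i + real k * F k i)
      = (\<Sum>i=0..k+2. G (Suc i) - G i)"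
    using pt by simp
  also have "\<dots> = G (Suc (k+2)) - G 0" by (rule sum_Suc_diff) simp
  also have "\<dots> = 0" unfolding G_def by (simp del: binomial_Suc_Suc)
  finally have z: "(\<Sum>i=0..k+2. (real k+3) * F (k+2) i - 3*(2*real k+3) * F (k+1) i + real k * F k i) = 0" .
  have b2: "schroeder (k+2) = (\<Sum>i=0..k+2. F (k+2) i)" unfolding F_def by (rule S_ext) simp
  have b1: "schroeder (k+1) = (\<Sum>i=0..k+2. F (k+1) i)" unfolding F_def by (rule S_ext) simp
  have b0: "schroeder k = (\<Sum>i=0..k+2. F k i)" unfolding F_def by (rule S_ext) simp
  show ?thesis using z unfolding b2 b1 b0 sum.distrib sum_subtractf sum_distrib_left[symmetric] by simp
qed

lemma cat_B: "catalan (Suc k) = 2^k * Bx (1/4) k"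
proof (induction k)
  case 0
  then show ?case by (simp add: catalan_def Bx_def)
next
  case (Suc k)
  have r: "(real k+3) * Bx (1/4) (k+1) = (2*real k+3) * Bx (1/4) k"
  proof (cases k)
    case 0
    then show ?thesis by (simp add: catalan_def Bx_def)
  next
    case (Suc m)
    show ?thesis using Bx_rec[of m "1/4"] unfolding Suc by (simp add: algebra_simps)
  qed
  have c: "catalan (Suc (Suc k)) = catalan (Suc k) * (2 * (2 * real (Suc k) + 1)) / (real (Suc k) + 2)"
    by (rule catalan_Suc)
  have h: "real k + 3 \<noteq> 0" by linarith
  have "Bx (1/4) (k+1) = (2*real k+3) * Bx (1/4) k / (real k + 3)" using r h by (simp add: field_simps)
  then show ?case unfolding c Suc.IH using h by (simp add: field_simps)
qed

lemma sch_B2: "schroeder (Suc k) = 2*3^k*Bx (2/9) k \<and> schroeder (Suc (Suc k)) = 2*3^(Suc k)*Bx (2/9) (Suc k)"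
proof (induction k)
  case 0
  then show ?case by (simp add: catalan_def Bx_def schroeder_def numeral_eq_Suc)
next
  case (Suc k)
  have r1: "(real k+4) * schroeder (k+3) = 3*(2*real k+5) * schroeder (k+2) - (real k + 1) * schroeder (k+1)"
    using S_rec[of "k+1"] by (simp add: algebra_simps eval_nat_numeral)
  have r2: "(real k+4) * Bx (2/9) (k+2) = (2*real k+5) * Bx (2/9) (k+1) - (real k+1)/9 * Bx (2/9) k"
    using Bx_rec[of k "2/9"] by (simp add: algebra_simps)
  have h: "real k + 4 \<noteq> 0" by linarith
  have a: "schroeder (k+1) = 2*3^k*Bx (2/9) k" "schroeder (k+2) = 2*3^(Suc k)*Bx (2/9) (Suc k)" using Suc.IH by simp_all
  have "schroeder (k+3) = (3*(2*real k+5) * schroeder (k+2) - (real k + 1) * schroeder (k+1)) / (real k+4)"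
    using r1 h by (simp add: field_simps)
  also have "\<dots> = 2*3^(k+2)*((2*real k+5) * Bx (2/9) (k+1) - (real k+1)/9 * Bx (2/9) k) / (real k+4)"
    unfolding a by (simp add: field_simps)
  also have "\<dots> = 2*3^(k+2)*Bx (2/9) (k+2)"
  proof -
    have r2': "Bx (2/9) (k+2) = ((2*real k+5) * Bx (2/9) (k+1) - (real k+1)/9 * Bx (2/9) k) / (real k+4)"
      using r2 h by (simp add: field_simps)
    show ?thesis unfolding r2' by simp
  qed
  finally show ?case using Suc.IH by (simp add: numeral_eq_Suc)
qed

lemma sch_B: "schroeder (Suc k) = 2*3^k*Bx (2/9) k"
  using sch_B2 by blast

lemma inner_bt:
  fixes y z :: real
  shows "(\<Sum>k=0..n. real (n choose k) * real (k choose m) * y^(n-k) * z^k) = real (n choose m) * z^m * (y+z)^(n-m)"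
proof (cases "m \<le> n")
  case False
  then show ?thesis by (intro trans[OF sum.neutral]) auto
next
  case True
  define f where "f k = real (n choose k) * real (k choose m) * y^(n-k) * z^k" for k
  have "(\<Sum>k=0..n. f k) = (\<Sum>k=m..n. f k)"
    by (rule sum.mono_neutral_right) (auto simp: f_def)
  also have "\<dots> = (\<Sum>t=0..n-m. f (t+m))"
    using sum.atLeastAtMost_shift_bounds[of f 0 m "n-m"] True by (simp add: comp_def add.commute)
  also have "\<dots> = (\<Sum>t=0..n-m. real (n choose m) * z^m * (real ((n-m) choose t) * z^t * y^(n-m-t)))"
  proof (rule sum.cong)
    fix t assume t: "t \<in> {0..n-m}"
    have cm: "(n choose (t+m)) * ((t+m) choose m) = (n choose m) * ((n-m) choose t)"
      using choose_mult[of m "t+m" n] t True by simp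
    have "f (t+m) = real ((n choose (t+m)) * ((t+m) choose m)) * y^(n-(t+m)) * z^(t+m)"
      unfolding f_def by simp
    also have "\<dots> = real ((n choose m) * ((n-m) choose t)) * y^(n-m-t) * (z^m * z^t)"
      unfolding cm by (simp add: power_add diff_diff_add add.commute)
    finally show "f (t+m) = real (n choose m) * z^m * (real ((n-m) choose t) * z^t * y^(n-m-t))"
      by simp
  qed simp
  also have "\<dots> = real (n choose m) * z^m * (\<Sum>t\<le>n-m. real ((n-m) choose t) * z^t * y^(n-m-t))"
    by (simp add: sum_distrib_left atLeast0AtMost)
  also have "\<dots> = real (n choose m) * z^m * (z+y)^(n-m)"
    by (simp add: binomial_ring)
  finally show ?thesis unfolding f_def by (simp add: add.commute)
qed

lemma BT:
  fixes w :: "nat \<Rightarrow> real" and y z :: real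
  shows "(\<Sum>k=0..n. real (n choose k) * y^(n-k) * z^k * (\<Sum>i=0..k. real (k choose (2*i)) * w i))
       = (\<Sum>i=0..n. real (n choose (2*i)) * w i * z^(2*i) * (y+z)^(n-2*i))"
proof -
  have "(\<Sum>k=0..n. real (n choose k) * y^(n-k) * z^k * (\<Sum>i=0..k. real (k choose (2*i)) * w i))
      = (\<Sum>k=0..n. \<Sum>i=0..n. w i * (real (n choose k) * real (k choose (2*i)) * y^(n-k) * z^k))"
  proof (rule sum.cong)
    fix k assume k: "k \<in> {0..n}"
    have "(\<Sum>i=0..k. real (k choose (2*i)) * w i) = (\<Sum>i=0..n. real (k choose (2*i)) * w i)"
      using k by (intro sum.mono_neutral_left) auto
    then show "real (n choose k) * y^(n-k) * z^k * (\<Sum>i=0..k. real (k choose (2*i)) * w i)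
      = (\<Sum>i=0..n. w i * (real (n choose k) * real (k choose (2*i)) * y^(n-k) * z^k))"
      by (simp add: sum_distrib_left algebra_simps)
  qed simp
  also have "\<dots> = (\<Sum>i=0..n. \<Sum>k=0..n. w i * (real (n choose k) * real (k choose (2*i)) * y^(n-k) * z^k))"
    by (rule sum.swap)
  also have "\<dots> = (\<Sum>i=0..n. w i * (real (n choose (2*i)) * z^(2*i) * (y+z)^(n-2*i)))"
    by (simp add: sum_distrib_left[symmetric] inner_bt)
  finally show ?thesis by (simp add: algebra_simps)
qed

lemma M_sum: "motzkin n = (\<Sum>i=0..n. real (n choose (2*i)) * catalan i)"
  unfolding motzkin_def by (intro sum.mono_neutral_left) auto

lemma catB_sum: "catalan (Suc k) = 2^k * (\<Sum>i=0..k. real (k choose (2*i)) * (catalan i * (1/4)^i))"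
  unfolding cat_B Bx_def by (simp add: mult.assoc)

lemma schB_sum: "schroeder (Suc k) = 2 * (3^k * (\<Sum>i=0..k. real (k choose (2*i)) * (catalan i * (2/9)^i)))"
  unfolding sch_B Bx_def by (simp add: mult.assoc)

lemma sq2: "(2/9::real)^i * 3^(2*i) * sqrt 2^(n-2*i) = (if 2*i \<le> n then sqrt 2^n else (2/9::real)^i * 3^(2*i) * sqrt 2^(n-2*i))"
proof (cases "2*i \<le> n")
  case True
  have "(2/9::real)^i * 3^(2*i) = sqrt 2^(2*i)"
    by (simp add: power_mult power_mult_distrib[symmetric])
  then have "(2/9::real)^i * 3^(2*i) * sqrt 2^(n-2*i) = sqrt 2^(2*i + (n-2*i))"
    by (simp add: power_add)
  then show ?thesis using True by simp
qed simp

theorem proposition3p3: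
  fixes n :: nat
  shows "motzkin n = (\<Sum>k=0..n. (-1) ^ (n - k) * real (n choose k) * catalan (k + 1))
       \<and> motzkin n = (\<Sum>k=0..n. (-1) ^ k * 3 ^ (n - k) * real (n choose k) * catalan (k + 1))
       \<and> motzkin n = (1 / sqrt 2 ^ (n + 2)) *
            (\<Sum>k=0..n. (sqrt 2 - 3) ^ (n - k) * real (n choose k) * schroeder (k + 1))
       \<and> motzkin n = (1 / sqrt 2 ^ (n + 2)) *
            (\<Sum>k=0..n. (-1) ^ k * (3 + sqrt 2) ^ (n - k) * real (n choose k) * schroeder (k + 1))"
proof (intro conjI)
  define w where "w i = catalan i * (1/4::real)^i" for i
  define v where "v i = catalan i * (2/9::real)^i" for i
  have e1: "(\<Sum>k=0..n. (-1) ^ (n - k) * real (n choose k) * catalan (k + 1))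
    = (\<Sum>k=0..n. real (n choose k) * (-1)^(n-k) * 2^k * (\<Sum>i=0..k. real (k choose (2*i)) * w i))"
    unfolding w_def by (intro sum.cong refl) (simp add: catB_sum)
  also have "\<dots> = (\<Sum>i=0..n. real (n choose (2*i)) * w i * 2^(2*i) * (-1+2)^(n-2*i))"
    by (rule BT)
  also have "\<dots> = motzkin n"
    unfolding M_sum w_def by (intro sum.cong refl) (simp add: power_mult power_mult_distrib[symmetric])
  finally show "motzkin n = (\<Sum>k=0..n. (-1) ^ (n - k) * real (n choose k) * catalan (k + 1))" by simp
  have "(\<Sum>k=0..n. (-1) ^ k * 3 ^ (n - k) * real (n choose k) * catalan (k + 1))
    = (\<Sum>k=0..n. real (n choose k) * 3^(n-k) * (-2)^k * (\<Sum>i=0..k. real (k choose (2*i)) * w i))"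
    unfolding w_def by (intro sum.cong refl) (simp add: catB_sum power_mult_distrib[symmetric])
  also have "\<dots> = (\<Sum>i=0..n. real (n choose (2*i)) * w i * (-2)^(2*i) * (3+(-2))^(n-2*i))"
    by (rule BT)
  also have "\<dots> = motzkin n"
    unfolding M_sum w_def by (intro sum.cong refl) (simp add: power_mult power_mult_distrib[symmetric])
  finally show "motzkin n = (\<Sum>k=0..n. (-1) ^ k * 3 ^ (n - k) * real (n choose k) * catalan (k + 1))" by simp
  have s2: "sqrt 2 ^ (n+2) = 2 * sqrt 2 ^ n" by (simp add: power_add)
  have s2n: "sqrt 2 ^ n \<noteq> 0" by simp
  have "(\<Sum>k=0..n. (sqrt 2 - 3) ^ (n - k) * real (n choose k) * schroeder (k + 1))
    = (\<Sum>k=0..n. 2 * (real (n choose k) * (sqrt 2 - 3)^(n-k) * 3^k * (\<Sum>i=0..k. real (k choose (2*i)) * v i)))"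
    unfolding v_def by (intro sum.cong refl) (simp add: schB_sum)
  also have "\<dots> = 2 * (\<Sum>k=0..n. real (n choose k) * (sqrt 2 - 3)^(n-k) * 3^k * (\<Sum>i=0..k. real (k choose (2*i)) * v i))"
    by (rule sum_distrib_left[symmetric])
  also have "\<dots> = 2 * (\<Sum>i=0..n. real (n choose (2*i)) * v i * 3^(2*i) * ((sqrt 2 - 3)+3)^(n-2*i))"
    by (subst BT) (rule refl)
  also have "\<dots> = 2 * sqrt 2 ^ n * motzkin n"
    unfolding M_sum v_def sum_distrib_left
  proof (intro sum.cong refl)
    fix i assume "i \<in> {0..n}"
    show "2 * (real (n choose (2*i)) * (catalan i * (2/9)^i) * 3^(2*i) * (sqrt 2 - 3 + 3)^(n-2*i))
      = 2 * sqrt 2 ^ n * (real (n choose (2*i)) * catalan i)"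
    proof (cases "2*i \<le> n")
      case True
      then show ?thesis using sq2[of i n] by (simp add: algebra_simps)
    qed simp
  qed
  finally show "motzkin n = (1 / sqrt 2 ^ (n + 2)) *
            (\<Sum>k=0..n. (sqrt 2 - 3) ^ (n - k) * real (n choose k) * schroeder (k + 1))"
    unfolding s2 using s2n by simp
  have "(\<Sum>k=0..n. (-1) ^ k * (3 + sqrt 2) ^ (n - k) * real (n choose k) * schroeder (k + 1))
    = (\<Sum>k=0..n. 2 * (real (n choose k) * (3 + sqrt 2)^(n-k) * (-3)^k * (\<Sum>i=0..k. real (k choose (2*i)) * v i)))"
    unfolding v_def by (intro sum.cong refl) (simp add: schB_sum power_mult_distrib[symmetric])
  also have "\<dots> = 2 * (\<Sum>k=0..n. real (n choose k) * (3 + sqrt 2)^(n-k) * (-3)^k * (\<Sum>i=0..k. real (k choose (2*i)) * v i))"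
    by (rule sum_distrib_left[symmetric])
  also have "\<dots> = 2 * (\<Sum>i=0..n. real (n choose (2*i)) * v i * (-3)^(2*i) * ((3 + sqrt 2)+(-3))^(n-2*i))"
    by (subst BT) (rule refl)
  also have "\<dots> = 2 * sqrt 2 ^ n * motzkin n"
    unfolding M_sum v_def sum_distrib_left
  proof (intro sum.cong refl)
    fix i assume "i \<in> {0..n}"
    show "2 * (real (n choose (2*i)) * (catalan i * (2/9)^i) * (-3)^(2*i) * (3 + sqrt 2 + -3)^(n-2*i))
      = 2 * sqrt 2 ^ n * (real (n choose (2*i)) * catalan i)"
    proof (cases "2*i \<le> n")
      case True
      have "(-3::real)^(2*i) = 3^(2*i)" by (simp add: power_mult)
      then show ?thesis using True sq2[of i n] by (simp add: algebra_simps)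
    qed simp
  qed
  finally show "motzkin n = (1 / sqrt 2 ^ (n + 2)) *
            (\<Sum>k=0..n. (-1) ^ k * (3 + sqrt 2) ^ (n - k) * real (n choose k) * schroeder (k + 1))"
    unfolding s2 using s2n by simp
qed

end
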